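(* Let $\mathit{VI}$ be a finite set of variables with $\#\mathit{VI}=n$ and let $k\in\mathbb{N}$ with $1\le k\le n$. Then $\mathit{TS}_k\subseteq\mathit{TSD}_k$. Furthermore, if $n>1$ then $\mathit{TS}_k\subsetneq\mathit{TSD}_k$.
   Context: $\mathit{SG}=\wp(\mathit{VI})\setminus\{\emptyset\}$ and $\mathit{SH}=\wp(\mathit{SG})$, ordered by set inclusion. For $S\in\mathit{SG}$, $\mathrm{tuples}_k(S)=\{T\subseteq S\mid \#T=k\}$, and for $sh\in\mathit{SH}$, $\mathrm{tuples}_k(sh)=\bigcup_{S'\in sh}\mathrm{tuples}_k(S')$. Define $\rho_{\mathit{TS}_k}(sh)=\{S\in\mathit{SG}\mid \mathrm{tuples}_k(S)\subseteq\mathrm{tuples}_k(sh)\}$ and $\mathit{TS}_k=\rho_{\mathit{TS}_k}(\mathit{SH})$. Define $\rho_{\mathit{TSD}_k}(sh)=\{\,S\in\mathit{SG}\mid \forall T\subseteq S:\ \#T<k\implies S=\bigcup\{U\in sh\mid T\subseteq U\subseteq S\}\,\}$ and $\mathit{TSD}_k=\rho_{\mathit{TSD}_k}(\mathit{SH})$. Both maps are upper closure operators on $\mathit{SH}$. *)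

theory Defs
  imports Main
begin

definition SG :: "'v set \<Rightarrow> 'v set set" where
  "SG VI = Pow VI - {{}}"

definition SH :: "'v set \<Rightarrow> 'v set set set" where
  "SH VI = Pow (SG VI)"

definition tuples :: "nat \<Rightarrow> 'v set \<Rightarrow> 'v set set" where
  "tuples k S = {T. T \<subseteq> S \<and> card T = k}"

definition tuples_sh :: "nat \<Rightarrow> 'v set set \<Rightarrow> 'v set set" where
  "tuples_sh k sh = (\<Union>S'\<in>sh. tuples k S')"

definition rho_TS :: "'v set \<Rightarrow> nat \<Rightarrow> 'v set set \<Rightarrow> 'v set set" where
  "rho_TS VI k sh = {S \<in> SG VI. tuples k S \<subseteq> tuples_sh k sh}"

definition TS :: "'v set \<Rightarrow> nat \<Rightarrow> 'v set set set" where
  "TS VI k = rho_TS VI k ` SH VI"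

definition rho_TSD :: "'v set \<Rightarrow> nat \<Rightarrow> 'v set set \<Rightarrow> 'v set set" where
  "rho_TSD VI k sh = {S \<in> SG VI. \<forall>T. T \<subseteq> S \<longrightarrow> card T < k \<longrightarrow>
        S = \<Union>{U \<in> sh. T \<subseteq> U \<and> U \<subseteq> S}}"

definition TSD :: "'v set \<Rightarrow> nat \<Rightarrow> 'v set set set" where
  "TSD VI k = rho_TSD VI k ` SH VI"

end

theory Submission
  imports Defs
begin

lemma mem_eq_Union: "S = \<Union>A \<Longrightarrow> s \<in> S \<Longrightarrow> \<exists>U\<in>A. s \<in> U"
  by blast

lemma rho_TSD_ext:
  assumes "x \<subseteq> SG VI"
  shows "x \<subseteq> rho_TSD VI k x"
proof
  fix S assume S: "S \<in> x"
  have "\<forall>T. T \<subseteq> S \<longrightarrow> card T < k \<longrightarrow> S = \<Union>{U \<in> x. T \<subseteq> U \<and> U \<subseteq> S}"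
    using S by blast
  then show "S \<in> rho_TSD VI k x" using S assms unfolding rho_TSD_def by blast
qed

lemma rho_TSD_back:
  assumes fin: "finite VI" and k: "1 \<le> k"
  shows "rho_TSD VI k (rho_TS VI k sh) \<subseteq> rho_TS VI k sh"
proof
  fix S assume S: "S \<in> rho_TSD VI k (rho_TS VI k sh)"
  let ?x = "rho_TS VI k sh"
  have SG: "S \<in> SG VI" and C: "\<And>T. T \<subseteq> S \<Longrightarrow> card T < k \<Longrightarrow> S = \<Union>{U \<in> ?x. T \<subseteq> U \<and> U \<subseteq> S}"
    using S unfolding rho_TSD_def by blast+
  have finS: "finite S" using SG fin unfolding SG_def by (auto intro: finite_subset)
  have "tuples k S \<subseteq> tuples_sh k sh"
  proof
    fix T assume T: "T \<in> tuples k S"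
    then have TS: "T \<subseteq> S" and cT: "card T = k" unfolding tuples_def by auto
    have finT: "finite T" using TS finS by (rule finite_subset)
    have "T \<noteq> {}" using cT k by auto
    then obtain t where t: "t \<in> T" by auto
    have "card (T - {t}) < k" using cT t finT k by simp
    then have eq: "S = \<Union>{U \<in> ?x. T - {t} \<subseteq> U \<and> U \<subseteq> S}" using C TS by blast
    have "t \<in> S" using t TS by auto
    then obtain U where U: "U \<in> ?x" "T - {t} \<subseteq> U" "U \<subseteq> S" "t \<in> U"
      using mem_eq_Union[OF eq] by blast
    have TU: "T \<subseteq> U" using U(2,4) by blast
    have "tuples k U \<subseteq> tuples_sh k sh" using U(1) unfolding rho_TS_def by auto
    moreover have "T \<in> tuples k U" using TU cT unfolding tuples_def by auto
    ultimately show "T \<in> tuples_sh k sh" by blast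
  qed
  then show "S \<in> ?x" using SG unfolding rho_TS_def by auto
qed

lemma rho_TS_SG: "rho_TS VI k sh \<subseteq> SG VI"
  unfolding rho_TS_def by auto

theorem proposition3p11:
  fixes VI :: "'v set" and n k :: nat
  assumes "finite VI" and "card VI = n" and "1 \<le> k" and "k \<le> n"
  shows "TS VI k \<subseteq> TSD VI k \<and> (n > 1 \<longrightarrow> TS VI k \<subset> TSD VI k)"
proof -
  have sub: "TS VI k \<subseteq> TSD VI k"
  proof
    fix x assume "x \<in> TS VI k"
    then obtain sh where x: "x = rho_TS VI k sh" unfolding TS_def by auto
    have "x \<subseteq> SG VI" using x rho_TS_SG by blast
    then have "x \<subseteq> rho_TSD VI k x" by (rule rho_TSD_ext)
    moreover have "rho_TSD VI k x \<subseteq> x" unfolding x by (rule rho_TSD_back[OF assms(1,3)])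
    ultimately have e: "x = rho_TSD VI k x" by (rule antisym)
    have "x \<in> SH VI" using \<open>x \<subseteq> SG VI\<close> unfolding SH_def by blast
    then show "x \<in> TSD VI k" unfolding TSD_def using e by (rule rev_image_eqI)
  qed
  moreover have "n > 1 \<longrightarrow> TS VI k \<subset> TSD VI k"
  proof
    assume n: "n > 1"
    then have ne: "VI \<noteq> {}" using assms(2) by auto
    have VISG: "VI \<in> SG VI" using ne unfolding SG_def by auto
    have "rho_TSD VI k {VI} = {VI}"
    proof
      show "{VI} \<subseteq> rho_TSD VI k {VI}" using rho_TSD_ext[of "{VI}" VI k] VISG by auto
    next
      show "rho_TSD VI k {VI} \<subseteq> {VI}"
      proof
        fix S assume S: "S \<in> rho_TSD VI k {VI}"
        have SG: "S \<in> SG VI" and all: "\<forall>T. T \<subseteq> S \<longrightarrow> card T < k \<longrightarrow> S = \<Union>{U \<in> {VI}. T \<subseteq> U \<and> U \<subseteq> S}"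
          using S unfolding rho_TSD_def by blast+
        have eq: "S = \<Union>{U \<in> {VI}. {} \<subseteq> U \<and> U \<subseteq> S}"
          using spec[OF all, of "{}"] assms(3) by (simp only: empty_subsetI card.empty)
        obtain s where "s \<in> S" using SG unfolding SG_def by blast
        then have "VI \<subseteq> S" using mem_eq_Union[OF eq] by blast
        moreover have "S \<subseteq> VI" using SG unfolding SG_def by blast
        ultimately show "S \<in> {VI}" by blast
      qed
    qed
    moreover have "{VI} \<in> SH VI" using VISG unfolding SH_def by auto
    ultimately have in1: "{VI} \<in> TSD VI k" unfolding TSD_def by (metis rev_image_eqI)
    have notin: "{VI} \<notin> TS VI k"
    proof
      assume "{VI} \<in> TS VI k"
      then obtain sh where eq: "rho_TS VI k sh = {VI}" unfolding TS_def by auto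
      have "VI \<in> rho_TS VI k sh" using eq by blast
      then have "tuples k VI \<subseteq> tuples_sh k sh" unfolding rho_TS_def by blast
      obtain a where a: "a \<in> VI" using ne by auto
      have "tuples k {a} \<subseteq> tuples k VI" using a unfolding tuples_def by blast
      moreover have "{a} \<in> SG VI" using a unfolding SG_def by blast
      ultimately have "{a} \<in> rho_TS VI k sh"
        using \<open>tuples k VI \<subseteq> tuples_sh k sh\<close> unfolding rho_TS_def by blast
      then have "{a} = VI" using eq by blast
      then show False using n assms(2) by auto
    qed
    show "TS VI k \<subset> TSD VI k" using sub in1 notin by blast
  qed
  ultimately show ?thesis by blast
qed

end
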